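(* For every integer $n\ge 2$ and every real $x$, $$W^{(1)}_{n}(x)=(-2)^{n-1}\,n\,(n-2)!\,\sin^{n}(x)\,W^{(1)}_{n-1}(x).$$
   Context: For smooth functions $f_1,\dots,f_n$ of a real variable $x$, $\mathrm{Wr}\{f_1,\dots,f_n\}$ denotes the determinant of the $n\times n$ matrix with $(i,j)$ entry $f_j^{(i-1)}(x)$. Define $W^{(1)}_1(x):=\sin(2x)$ and, for $n\ge2$, $W^{(1)}_n(x):=\mathrm{Wr}\{\sin(x),\sin(2x),\dots,\sin((n-1)x),\sin((n+1)x)\}$. *)

theory Defs
  imports "HOL-Analysis.Derivative" "Jordan_Normal_Form.Determinant"
begin

definition Wr :: "nat \<Rightarrow> (nat \<Rightarrow> real \<Rightarrow> real) \<Rightarrow> real \<Rightarrow> real" where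
  "Wr n f x = det (mat n n (\<lambda>(i, j). (deriv ^^ i) (f j) x))"

definition W1_fun :: "nat \<Rightarrow> nat \<Rightarrow> real \<Rightarrow> real" where
  "W1_fun n j = (if j < n - 1 then (\<lambda>t. sin (real (j + 1) * t)) else (\<lambda>t. sin (real (n + 1) * t)))"

definition W1 :: "nat \<Rightarrow> real \<Rightarrow> real" where
  "W1 n x = (if n = 1 then sin (2 * x) else Wr n (W1_fun n) x)"

end

theory Submission imports Defs begin

fun U :: "nat \<Rightarrow> real poly" where
  "U 0 = 1"
| "U (Suc 0) = [:0, 2:]"
| "U (Suc (Suc k)) = pCons 0 (smult 2 (U (Suc k))) - U k"

lemma U_sin: "sin (real (Suc k) * t) = sin t * poly (U k) (cos t)"
proof (induction k rule: U.induct)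
  case 1 then show ?case by simp
next
  case 2 then show ?case by (simp add: sin_double)
next
  case (3 k)
  have e: "sin (real (Suc (Suc (Suc k))) * t) = 2 * cos t * sin (real (Suc (Suc k)) * t) - sin (real (Suc k) * t)"
  proof -
    have a: "real (Suc (Suc (Suc k))) * t = real (Suc (Suc k)) * t + t" by (simp add: algebra_simps)
    have b: "real (Suc k) * t = real (Suc (Suc k)) * t - t" by (simp add: algebra_simps)
    show ?thesis unfolding a b sin_add sin_diff by (simp add: algebra_simps)
  qed
  show ?case unfolding e 3 by (simp add: algebra_simps)
qed

lemma U_coeff_gt: "m > k \<Longrightarrow> coeff (U k) m = 0"
  and U_coeff_odd: "odd (k + m) \<Longrightarrow> coeff (U k) m = 0"
  and U_coeff_lead: "coeff (U k) k = 2 ^ k"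
proof (induction k arbitrary: m rule: U.induct)
  case 1
  { case 1 then show ?case by (simp add: coeff_1) next
    case 2 then show ?case by (cases m) (auto simp: coeff_1) next
    case 3 then show ?case by simp }
next
  case 2
  { case 1 then show ?case by (cases m) (auto simp: coeff_pCons split: nat.splits) next
    case 2
    have "m \<noteq> 1" using 2 by auto
    then show ?case by (cases m) (auto simp: coeff_pCons split: nat.splits) next
    case 3 then show ?case by simp }
next
  case (3 k)
  { case 1 then show ?case using "3.IH" by (cases m) (auto simp: coeff_pCons) next
    case 2 then show ?case using "3.IH" by (cases m) (auto simp: coeff_pCons) next
    case 3 then show ?case using "3.IH" by (simp add: coeff_pCons) }
qed

lemma coeff_pderiv_iter: "coeff ((pderiv ^^ k) (p::real poly)) m = fact (m + k) / fact m * coeff p (m + k)"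
proof (induction k arbitrary: m)
  case 0 then show ?case using fact_gt_zero[of m, where 'a=real] by simp
next
  case (Suc k)
  have "coeff ((pderiv ^^ Suc k) p) m = of_nat (Suc m) * coeff ((pderiv ^^ k) p) (Suc m)"
    by (simp add: coeff_pderiv)
  also have "\<dots> = of_nat (Suc m) * (fact (Suc m + k) / fact (Suc m) * coeff p (Suc m + k))"
    using Suc by simp
  also have "fact (Suc m) = (of_nat (Suc m) :: real) * fact m" by simp
  also have "of_nat (Suc m) * (fact (Suc m + k) / (of_nat (Suc m) * fact m) * coeff p (Suc m + k))
     = fact (m + Suc k) / fact m * coeff p (m + Suc k)"
    by (simp del: of_nat_Suc add: field_simps)
  finally show ?case .
qed

lemma pderiv_U_high: "j < i \<Longrightarrow> (pderiv ^^ i) (U j) = 0"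
  by (rule poly_eqI) (simp add: coeff_pderiv_iter U_coeff_gt)

lemma pderiv_U_diag: "(pderiv ^^ j) (U j) = [:fact j * 2 ^ j:]"
  by (rule poly_eqI) (auto simp: coeff_pderiv_iter U_coeff_gt U_coeff_lead coeff_pCons split: nat.split)

lemma pderiv_U_sub: assumes "n \<ge> 1" shows "(pderiv ^^ (n - 1)) (U n) = [:0, fact n * 2 ^ n:]"
proof (rule poly_eqI)
  fix m
  show "coeff ((pderiv ^^ (n - 1)) (U n)) m = coeff [:0, fact n * 2 ^ n:] m"
  proof (cases m)
    case 0
    have "odd (n + (n - 1))" using assms by presburger
    then show ?thesis using 0 by (simp add: coeff_pderiv_iter U_coeff_odd)
  next
    case (Suc m')
    show ?thesis
    proof (cases m')
      case 0 then show ?thesis using Suc assms by (simp add: coeff_pderiv_iter U_coeff_lead)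
    next
      case (Suc m'')
      then show ?thesis using \<open>m = Suc m'\<close> assms by (simp add: coeff_pderiv_iter U_coeff_gt)
    qed
  qed
qed

definition ev :: "real poly \<times> real poly \<Rightarrow> real \<Rightarrow> real" where
  "ev pq x = poly (fst pq) (cos x) + sin x * poly (snd pq) (cos x)"

definition dr :: "real poly \<times> real poly \<Rightarrow> real poly \<times> real poly" where
  "dr pq = ([:0,1:] * snd pq - (1 - [:0,1:]^2) * pderiv (snd pq), - pderiv (fst pq))"

definition ms :: "real poly \<times> real poly \<Rightarrow> real poly \<times> real poly" where
  "ms pq = (- ((1 - [:0,1:]^2) * snd pq), - fst pq)"

definition padd :: "real poly \<times> real poly \<Rightarrow> real poly \<times> real poly \<Rightarrow> real poly \<times> real poly" where
  "padd a b = (fst a + fst b, snd a + snd b)"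

lemma DERIV_eq: "(f has_real_derivative a) F \<Longrightarrow> a = b \<Longrightarrow> (f has_real_derivative b) F" by simp

lemma poly_cos_deriv: "((\<lambda>x. poly P (cos x)) has_real_derivative (- sin x) * poly (pderiv P) (cos x)) (at x)"
  by (rule has_field_derivative_poly[OF DERIV_cos])

lemma sc_aux: "cos x * (cos x * y) + sin x * (sin x * y) = (y::real)"
  by (metis sin_cos_squared_add3 distrib_right mult.assoc mult_1)

lemma ev_deriv: "(ev pq has_real_derivative ev (dr pq) x) (at x)"
  unfolding ev_def[abs_def]
  apply (rule DERIV_eq[OF DERIV_add[OF poly_cos_deriv DERIV_mult[OF DERIV_sin poly_cos_deriv]]])
  unfolding dr_def using sin_squared_eq[of x] by (simp add: algebra_simps power2_eq_square) (metis sc_aux)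

lemma ev_ms: "ev (ms pq) x = - sin x * ev pq x"
  unfolding ev_def ms_def by (simp add: algebra_simps power2_eq_square sc_aux)

lemma ev_padd: "ev (padd a b) x = ev a x + ev b x"
  unfolding ev_def padd_def by (simp add: algebra_simps)

lemma ev_zero[simp]: "ev (0, 0) x = 0" unfolding ev_def by simp

fun C :: "nat \<Rightarrow> nat \<Rightarrow> real poly \<times> real poly" where
  "C 0 k = (if k = 0 then (0, 1) else (0, 0))"
| "C (Suc i) k = padd (dr (C i k)) (if k = 0 then (0, 0) else ms (C i (k - 1)))"

lemma C_zero: "i < k \<Longrightarrow> C i k = (0, 0)"
  by (induction i arbitrary: k) (auto simp: padd_def dr_def ms_def)

lemma C_diag: "ev (C i i) x = sin x * (- sin x) ^ i"
  by (induction i) (simp add: ev_def, simp add: ev_padd ev_ms C_zero dr_def)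

lemma C_step: "ev (C (Suc i) k) x = ev (dr (C i k)) x + (if k = 0 then 0 else - sin x * ev (C i (k - 1)) x)"
  by (simp add: ev_padd ev_ms)

lemma deriv_iter:
  "(deriv ^^ i) (\<lambda>t. sin t * poly q (cos t)) = (\<lambda>x. \<Sum>k\<le>i. ev (C i k) x * poly ((pderiv ^^ k) q) (cos x))"
proof (induction i)
  case 0
  show ?case by (simp add: ev_def)
next
  case (Suc i)
  let ?P = "\<lambda>k x. poly ((pderiv ^^ k) q) (cos x)"
  have d: "deriv (\<lambda>x. \<Sum>k\<le>i. ev (C i k) x * ?P k x) x = (\<Sum>k\<le>Suc i. ev (C (Suc i) k) x * ?P k x)" for x
  proof -
    have "((\<lambda>x. \<Sum>k\<le>i. ev (C i k) x * ?P k x) has_real_derivative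
       (\<Sum>k\<le>i. ev (dr (C i k)) x * ?P k x + ev (C i k) x * ((- sin x) * ?P (Suc k) x))) (at x)"
      by (intro DERIV_sum DERIV_eq[OF DERIV_mult[OF ev_deriv poly_cos_deriv]]) (simp add: algebra_simps)
    hence "deriv (\<lambda>x. \<Sum>k\<le>i. ev (C i k) x * ?P k x) x
      = (\<Sum>k\<le>i. ev (dr (C i k)) x * ?P k x + ev (C i k) x * ((- sin x) * ?P (Suc k) x))"
      by (rule DERIV_imp_deriv)
    also have "\<dots> = (\<Sum>k\<le>i. ev (dr (C i k)) x * ?P k x) + (\<Sum>k\<le>i. ev (C i k) x * ((- sin x) * ?P (Suc k) x))"
      by (simp add: sum.distrib sum_subtractf sum_negf)
    also have "(\<Sum>k\<le>i. ev (dr (C i k)) x * ?P k x) = (\<Sum>k\<le>Suc i. ev (dr (C i k)) x * ?P k x)"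
      by (simp add: C_zero dr_def)
    also have "(\<Sum>k\<le>i. ev (C i k) x * ((- sin x) * ?P (Suc k) x))
       = (\<Sum>k\<le>Suc i. (if k = 0 then 0 else - sin x * ev (C i (k - 1)) x) * ?P k x)"
      by (subst sum.atMost_Suc_shift) (simp add: algebra_simps)
    also have "(\<Sum>k\<le>Suc i. ev (dr (C i k)) x * ?P k x) + \<dots> = (\<Sum>k\<le>Suc i. ev (C (Suc i) k) x * ?P k x)"
      by (subst sum.distrib[symmetric], intro sum.cong refl) (simp del: C.simps add: C_step algebra_simps)
    finally show ?thesis .
  qed
  show ?case unfolding funpow.simps o_apply Suc.IH by (rule ext) (rule d)
qed


definition q :: "nat \<Rightarrow> nat \<Rightarrow> real poly" where
  "q n j = (if j < n - 1 then U j else U n)"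

lemma W1_fun_eq: "W1_fun n j = (\<lambda>t. sin t * poly (q n j) (cos t))"
proof (rule ext)
  fix t
  show "W1_fun n j t = sin t * poly (q n j) (cos t)"
  proof (cases "j < n - 1")
    case True
    then show ?thesis unfolding W1_fun_def q_def using U_sin[of j t] by simp
  next
    case False
    then show ?thesis unfolding W1_fun_def q_def using U_sin[of n t] by simp
  qed
qed

lemma Wr_closed:
  assumes "n \<ge> 2"
  shows "Wr n (W1_fun n) x = (\<Prod>i<n. sin x * (- sin x) ^ i) * (\<Prod>j<n. poly ((pderiv ^^ j) (q n j)) (cos x))"
proof -
  let ?L = "mat n n (\<lambda>(i, k). ev (C i k) x)"
  let ?G = "mat n n (\<lambda>(k, j). poly ((pderiv ^^ k) (q n j)) (cos x))"
  have eq: "mat n n (\<lambda>(i, j). (deriv ^^ i) (W1_fun n j) x) = ?L * ?G"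
  proof (rule eq_matI)
    fix i j assume i: "i < dim_row (?L * ?G)" and j: "j < dim_col (?L * ?G)"
    hence ij: "i < n" "j < n" by auto
    have "(?L * ?G) $$ (i, j) = (\<Sum>k\<in>{0..<n}. ev (C i k) x * poly ((pderiv ^^ k) (q n j)) (cos x))"
      using ij by (simp add: scalar_prod_def)
    also have "\<dots> = (\<Sum>k\<in>{..i}. ev (C i k) x * poly ((pderiv ^^ k) (q n j)) (cos x))"
      by (rule sum.mono_neutral_right) (use ij in \<open>auto simp: C_zero\<close>)
    also have "\<dots> = (deriv ^^ i) (W1_fun n j) x" by (simp add: W1_fun_eq deriv_iter)
    finally show "mat n n (\<lambda>(i, j). (deriv ^^ i) (W1_fun n j) x) $$ (i, j) = (?L * ?G) $$ (i, j)"
      using ij by simp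
  qed auto
  have L: "?L \<in> carrier_mat n n" and G: "?G \<in> carrier_mat n n" by auto
  have dL: "det ?L = (\<Prod>i<n. sin x * (- sin x) ^ i)"
    by (subst det_lower_triangular[of n]) (auto simp: C_zero prod_list_diag_prod C_diag atLeast0LessThan)
  have ut: "upper_triangular ?G"
  proof (rule upper_triangularI)
    fix i j assume "j < i" "i < dim_row ?G"
    then have "j < n - 1" "i < n" by auto
    then show "?G $$ (i, j) = 0" using \<open>j < i\<close> by (simp add: q_def pderiv_U_high)
  qed
  have dG: "det ?G = (\<Prod>j<n. poly ((pderiv ^^ j) (q n j)) (cos x))"
    by (subst det_upper_triangular[OF ut G]) (auto simp: prod_list_diag_prod atLeast0LessThan)
  show ?thesis unfolding Wr_def eq det_mult[OF L G] dL dG ..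
qed

lemma W1_closed:
  assumes "n \<ge> 1"
  shows "W1 n x = (\<Prod>i<n. sin x * (- sin x) ^ i) * ((\<Prod>j<n-1. fact j * 2 ^ j) * (fact n * 2 ^ n * cos x))"
proof (cases "n = 1")
  case True
  then show ?thesis by (simp add: W1_def sin_double)
next
  case False
  then have n2: "n \<ge> 2" using assms by auto
  then obtain m where m: "n = Suc m" by (cases n) auto
  have "(\<Prod>j<n. poly ((pderiv ^^ j) (q n j)) (cos x))
     = (\<Prod>j<m. poly ((pderiv ^^ j) (q n j)) (cos x)) * poly ((pderiv ^^ m) (q n m)) (cos x)"
    unfolding m by simp
  also have "(\<Prod>j<m. poly ((pderiv ^^ j) (q n j)) (cos x)) = (\<Prod>j<m. fact j * 2 ^ j)"
    by (rule prod.cong) (auto simp: q_def m pderiv_U_diag)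
  also have "poly ((pderiv ^^ m) (q n m)) (cos x) = fact n * 2 ^ n * cos x"
    using pderiv_U_sub[of n] m by (simp add: q_def)
  finally have "(\<Prod>j<n. poly ((pderiv ^^ j) (q n j)) (cos x)) = (\<Prod>j<n-1. fact j * 2 ^ j) * (fact n * 2 ^ n * cos x)"
    using m by simp
  then show ?thesis using False n2 by (simp add: W1_def Wr_closed)
qed

theorem mainTheorem3:
  fixes n :: nat and x :: real
  assumes "n \<ge> 2"
  shows "W1 n x = (-2) ^ (n - 1) * real n * fact (n - 2) * sin x ^ n * W1 (n - 1) x"
proof -
  obtain m where m: "n = m + 2" using assms by (metis add.commute le_Suc_ex)
  have a: "W1 (m + 2) x = ((\<Prod>i<m+1. sin x * (- sin x) ^ i) * (sin x * (- sin x) ^ (m + 1))) *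
      (((\<Prod>j<m. fact j * 2 ^ j) * (fact m * 2 ^ m)) * (fact (m + 2) * 2 ^ (m + 2) * cos x))"
    by (subst W1_closed) simp_all
  have b: "W1 (m + 1) x = (\<Prod>i<m+1. sin x * (- sin x) ^ i) * ((\<Prod>j<m. fact j * 2 ^ j) * (fact (m + 1) * 2 ^ (m + 1) * cos x))"
    by (subst W1_closed) simp_all
  have f: "fact (m + 2) = (real m + 2) * fact (m + 1)"
    by (simp add: fact_Suc algebra_simps)
  show ?thesis unfolding m using a b
    by (simp add: f power_minus' power_add algebra_simps)
qed

end
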